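(* For any integer $m\ge1$ there exists $\varepsilon>0$ small enough such that on $I(m,\varepsilon)$, with $f_1,f_2,f_3$ the first three eigenfunctions of the Laplacian: (a) the first three eigenvalues are simple; (b) $f_2\circ\psi=-f_2$ and $N(f_2)=m$; (c) $f_3\circ\psi=f_3$ and $N(f_3)=2$.
   Context: $I(m,\varepsilon)$ is the metric graph with vertices $v_1,v_2,v_3,v_4$, an edge $e_1$ of length $1/2$ from $v_1$ to $v_2$, an edge $e_2$ of length $1/2$ from $v_3$ to $v_4$, and $m$ parallel edges of length $\varepsilon$ joining $v_2$ and $v_3$. The Laplacian $-\frac{d^2}{dx^2}$ acts edgewise with Dirichlet conditions at $v_1,v_4$ and Neumann–Kirchhoff conditions (continuity and vanishing sum of outgoing derivatives) at $v_2,v_3$; eigenvalues are ordered increasingly with multiplicity, with $L^2$-orthogonal eigenfunctions $f_1,f_2,\dots$. $\psi:I(m,\varepsilon)\to I(m,\varepsilon)$ is the reflection symmetry exchanging $v_1\leftrightarrow v_4$, $v_2\leftrightarrow v_3$, mapping $e_1$ isometrically onto $e_2$ and each small edge onto itself with orientation reversed. $N(f)$ is the number of zeroes of $f$ other than at $v_1,v_4$. *)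

theory Defs
  imports "HOL-Analysis.Analysis"
begin

text \<open>E1 x : point of e1 at distance x from v1 (x in [0,1/2]); E1 0 = v1, E1 (1/2) = v2.
  E2 x : point of e2 at distance x from v3 (x in [0,1/2]); E2 0 = v3, E2 (1/2) = v4.
  Sm j x : interior point of the j-th small edge (j < m) at distance x from v2 (x in (0,eps)).\<close>

datatype gpoint = E1 real | E2 real | Sm nat real

definition gpoints :: "nat \<Rightarrow> real \<Rightarrow> gpoint set" where
  "gpoints m eps =
     {E1 x | x. 0 \<le> x \<and> x \<le> 1/2} \<union> {E2 x | x. 0 \<le> x \<and> x \<le> 1/2}
     \<union> {Sm j x | j x. j < m \<and> 0 < x \<and> x < eps}"

text \<open>Edge functions of a function on the graph (small edge j oriented from v2 to v3).\<close>
definition edge1 :: "(gpoint \<Rightarrow> real) \<Rightarrow> real \<Rightarrow> real" where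
  "edge1 f x = f (E1 x)"

definition edge2 :: "(gpoint \<Rightarrow> real) \<Rightarrow> real \<Rightarrow> real" where
  "edge2 f x = f (E2 x)"

definition sedge :: "real \<Rightarrow> (gpoint \<Rightarrow> real) \<Rightarrow> nat \<Rightarrow> real \<Rightarrow> real" where
  "sedge eps f j x = (if x \<le> 0 then f (E1 (1/2)) else if eps \<le> x then f (E2 0) else f (Sm j x))"

definition edge_eq :: "real \<Rightarrow> real \<Rightarrow> (real \<Rightarrow> real) \<Rightarrow> (real \<Rightarrow> real) \<Rightarrow> bool" where
  "edge_eq L lam u u' \<longleftrightarrow>
     (\<forall>x\<in>{0..L}. (u has_real_derivative u' x) (at x within {0..L})) \<and>
     (\<forall>x\<in>{0..L}. (u' has_real_derivative (- lam * u x)) (at x within {0..L}))"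

text \<open>Eigenfunction of the Laplacian -d^2/dx^2 on I(m,eps) with Dirichlet conditions at v1, v4
  and Neumann--Kirchhoff conditions at v2, v3 (continuity at v2, v3 is encoded by the
  differentiability of the extended small-edge functions on the closed edges).\<close>
definition eigenfun :: "nat \<Rightarrow> real \<Rightarrow> real \<Rightarrow> (gpoint \<Rightarrow> real) \<Rightarrow> bool" where
  "eigenfun m eps lam f \<longleftrightarrow>
     (\<exists>p\<in>gpoints m eps. f p \<noteq> 0) \<and>
     f (E1 0) = 0 \<and> f (E2 (1/2)) = 0 \<and>
     (\<exists>d1 d2 ds.
        edge_eq (1/2) lam (edge1 f) d1 \<and>
        edge_eq (1/2) lam (edge2 f) d2 \<and>
        (\<forall>j<m. edge_eq eps lam (sedge eps f j) (ds j)) \<and>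
        - d1 (1/2) + (\<Sum>j<m. ds j 0) = 0 \<and>
        (\<Sum>j<m. - ds j eps) + d2 0 = 0)"

definition eigenval :: "nat \<Rightarrow> real \<Rightarrow> real \<Rightarrow> bool" where
  "eigenval m eps lam \<longleftrightarrow> (\<exists>f. eigenfun m eps lam f)"

definition simple_eigenval :: "nat \<Rightarrow> real \<Rightarrow> real \<Rightarrow> bool" where
  "simple_eigenval m eps lam \<longleftrightarrow> eigenval m eps lam \<and>
     (\<forall>f g. eigenfun m eps lam f \<and> eigenfun m eps lam g \<longrightarrow>
        (\<exists>c. \<forall>p\<in>gpoints m eps. f p = c * g p))"

fun psi :: "real \<Rightarrow> gpoint \<Rightarrow> gpoint" where
  "psi eps (E1 x) = E2 (1/2 - x)"
| "psi eps (E2 x) = E1 (1/2 - x)"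
| "psi eps (Sm j x) = Sm j (eps - x)"

text \<open>N(f): zeros of f other than at v1 = E1 0 and v4 = E2 (1/2).\<close>
definition zero_set :: "nat \<Rightarrow> real \<Rightarrow> (gpoint \<Rightarrow> real) \<Rightarrow> gpoint set" where
  "zero_set m eps f = {p \<in> gpoints m eps - {E1 0, E2 (1/2)}. f p = 0}"

end

theory Submission
  imports Defs
begin
lemma ode_pos:
  assumes eq: "edge_eq L (k^2) u u'" and k: "k > 0" and x: "x \<in> {0..L}"
  shows "u x = u 0 * cos (k*x) + u' 0 / k * sin (k*x) \<and>
         u' x = - u 0 * k * sin (k*x) + u' 0 * cos (k*x)"
proof -
  define w where "w x = u x - (u 0 * cos (k*x) + u' 0 / k * sin (k*x))" for x
  define w' where "w' x = u' x - (- u 0 * k * sin (k*x) + u' 0 * cos (k*x))" for x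
  have du: "\<And>x. x \<in> {0..L} \<Longrightarrow> (u has_real_derivative u' x) (at x within {0..L})"
   and du': "\<And>x. x \<in> {0..L} \<Longrightarrow> (u' has_real_derivative (-(k^2) * u x)) (at x within {0..L})"
    using eq unfolding edge_eq_def by auto
  have dw: "(w has_real_derivative w' x) (at x within {0..L})" if "x \<in> {0..L}" for x
    unfolding w_def[abs_def] w'_def
    using k by (auto intro!: derivative_eq_intros du that simp: field_simps)
  have dw': "(w' has_real_derivative (-(k^2) * w x)) (at x within {0..L})" if "x \<in> {0..L}" for x
    unfolding w_def w'_def[abs_def]
    using k by (auto intro!: derivative_eq_intros du' that simp: field_simps power2_eq_square)
  have "((\<lambda>x. k^2 * (w x)^2 + (w' x)^2) has_real_derivative 0) (at x within {0..L})"
    if "x \<in> {0..L}" for x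
    by (auto intro!: derivative_eq_intros dw dw' that simp: algebra_simps power2_eq_square)
  then have "\<exists>c. \<forall>x\<in>{0..L}. k^2 * (w x)^2 + (w' x)^2 = c"
    by (intro has_field_derivative_zero_constant) auto
  then obtain c where c: "\<forall>x\<in>{0..L}. k^2 * (w x)^2 + (w' x)^2 = c" by blast
  have "0 \<in> {0..L}" using x by auto
  moreover have "w 0 = 0" "w' 0 = 0" unfolding w_def w'_def using k by auto
  ultimately have "c = 0" using c by force
  then have "k^2 * (w x)^2 + (w' x)^2 = 0" using c x by auto
  moreover have "k^2 * (w x)^2 \<ge> 0" "(w' x)^2 \<ge> 0" by auto
  ultimately have "k^2 * (w x)^2 = 0" "(w' x)^2 = 0" by linarith+
  then have "w x = 0 \<and> w' x = 0" using k by auto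
  then show ?thesis unfolding w_def w'_def by auto
qed

lemma ode_neg:
  assumes eq: "edge_eq L (-(k^2)) u u'" and k: "k > 0" and x: "x \<in> {0..L}"
  shows "u x = u 0 * cosh (k*x) + u' 0 / k * sinh (k*x) \<and>
         u' x = u 0 * k * sinh (k*x) + u' 0 * cosh (k*x)"
proof -
  define w where "w x = u x - (u 0 * cosh (k*x) + u' 0 / k * sinh (k*x))" for x
  define w' where "w' x = u' x - (u 0 * k * sinh (k*x) + u' 0 * cosh (k*x))" for x
  have du: "\<And>x. x \<in> {0..L} \<Longrightarrow> (u has_real_derivative u' x) (at x within {0..L})"
   and du': "\<And>x. x \<in> {0..L} \<Longrightarrow> (u' has_real_derivative ((k^2) * u x)) (at x within {0..L})"
    using eq unfolding edge_eq_def by auto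
  have dw: "(w has_real_derivative w' x) (at x within {0..L})" if "x \<in> {0..L}" for x
    unfolding w_def[abs_def] w'_def
    using k by (auto intro!: derivative_eq_intros du that simp: field_simps)
  have dw': "(w' has_real_derivative ((k^2) * w x)) (at x within {0..L})" if "x \<in> {0..L}" for x
    unfolding w_def w'_def[abs_def]
    using k by (auto intro!: derivative_eq_intros du' that simp: field_simps power2_eq_square)
  have "((\<lambda>x. (w' x + k * w x) * exp (-(k*x))) has_real_derivative 0) (at x within {0..L})"
    if "x \<in> {0..L}" for x
    by (auto intro!: derivative_eq_intros dw dw' that simp: algebra_simps power2_eq_square)
  then have "\<exists>c. \<forall>x\<in>{0..L}. (w' x + k * w x) * exp (-(k*x)) = c"
    by (intro has_field_derivative_zero_constant) auto
  then obtain c where c: "\<forall>x\<in>{0..L}. (w' x + k * w x) * exp (-(k*x)) = c" by blast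
  have "((\<lambda>x. (w' x - k * w x) * exp (k*x)) has_real_derivative 0) (at x within {0..L})"
    if "x \<in> {0..L}" for x
    by (auto intro!: derivative_eq_intros dw dw' that simp: algebra_simps power2_eq_square)
  then have "\<exists>c. \<forall>x\<in>{0..L}. (w' x - k * w x) * exp (k*x) = c"
    by (intro has_field_derivative_zero_constant) auto
  then obtain d where d: "\<forall>x\<in>{0..L}. (w' x - k * w x) * exp (k*x) = d" by blast
  have "0 \<in> {0..L}" using x by auto
  moreover have "w 0 = 0" "w' 0 = 0" unfolding w_def w'_def using k by auto
  ultimately have "c = 0" "d = 0" using c d by force+
  then have "w' x + k * w x = 0" "w' x - k * w x = 0" using c d x by auto
  then have "w x = 0 \<and> w' x = 0" using k by auto
  then show ?thesis unfolding w_def w'_def by auto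
qed

lemma ode_zero:
  assumes eq: "edge_eq L 0 u u'" and x: "x \<in> {0..L}"
  shows "u x = u 0 + u' 0 * x \<and> u' x = u' 0"
proof -
  have du: "\<And>x. x \<in> {0..L} \<Longrightarrow> (u has_real_derivative u' x) (at x within {0..L})"
   and du': "\<And>x. x \<in> {0..L} \<Longrightarrow> (u' has_real_derivative 0) (at x within {0..L})"
    using eq unfolding edge_eq_def by auto
  have "\<exists>c. \<forall>x\<in>{0..L}. u' x = c"
    by (intro has_field_derivative_zero_constant) (auto intro: du')
  then obtain c where c: "\<forall>x\<in>{0..L}. u' x = c" by blast
  have "((\<lambda>x. u x - c * x) has_real_derivative 0) (at x within {0..L})"
    if "x \<in> {0..L}" for x
    using c that by (auto intro!: derivative_eq_intros du that)
  then have "\<exists>d. \<forall>x\<in>{0..L}. u x - c * x = d"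
    by (intro has_field_derivative_zero_constant) auto
  then obtain d where d: "\<forall>x\<in>{0..L}. u x - c * x = d" by blast
  have "0 \<in> {0..L}" using x by auto
  then show ?thesis using c d x by (metis add.commute cancel_comm_monoid_add_class.diff_cancel diff_eq_eq mult_zero_right)
qed

lemma gp_cases:
  assumes "p \<in> gpoints m eps"
  obtains x where "p = E1 x" "0 \<le> x" "x \<le> 1/2"
   | x where "p = E2 x" "0 \<le> x" "x \<le> 1/2"
   | j y where "p = Sm j y" "j < m" "0 < y" "y < eps"
  using assms unfolding gpoints_def by blast

lemma sedge_int: "0 < y \<Longrightarrow> y < eps \<Longrightarrow> sedge eps f j y = f (Sm j y)"
  unfolding sedge_def by auto

lemma sedge_0: "sedge eps f j 0 = f (E1 (1/2))"
  unfolding sedge_def by auto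

lemma sedge_eps: "0 < eps \<Longrightarrow> sedge eps f j eps = f (E2 0)"
  unfolding sedge_def by auto

lemma zero_on_gpoints:
  assumes "\<And>x. 0 \<le> x \<Longrightarrow> x \<le> 1/2 \<Longrightarrow> f (E1 x) = 0"
    "\<And>x. 0 \<le> x \<Longrightarrow> x \<le> 1/2 \<Longrightarrow> f (E2 x) = 0"
    "\<And>j y. j < m \<Longrightarrow> 0 < y \<Longrightarrow> y < eps \<Longrightarrow> sedge eps f j y = 0"
  shows "\<not> (\<exists>p\<in>gpoints m eps. f p \<noteq> 0)"
proof
  assume "\<exists>p\<in>gpoints m eps. f p \<noteq> 0"
  then obtain p where p: "p \<in> gpoints m eps" "f p \<noteq> 0" by blast
  from p(1) show False
  proof (cases rule: gp_cases)
    case (3 j y) then show False using p assms(3)[of j y] sedge_int[of y eps f j] by auto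
  qed (use p assms in auto)
qed

lemma no_neg:
  assumes m: "m \<ge> 1" and e: "eps > 0" and k: "k > 0"
  shows "\<not> eigenfun m eps (-(k^2)) f"
proof
  assume "eigenfun m eps (-(k^2)) f"
  then obtain d1 d2 ds where nz: "\<exists>p\<in>gpoints m eps. f p \<noteq> 0" and f0: "f (E1 0) = 0"
    and f1: "f (E2 (1/2)) = 0"
    and e1: "edge_eq (1/2) (-(k^2)) (edge1 f) d1" and e2: "edge_eq (1/2) (-(k^2)) (edge2 f) d2"
    and es: "\<forall>j<m. edge_eq eps (-(k^2)) (sedge eps f j) (ds j)"
    and K1: "- d1 (1/2) + (\<Sum>j<m. ds j 0) = 0" and K2: "(\<Sum>j<m. - ds j eps) + d2 0 = 0"
    unfolding eigenfun_def by blast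
  define p where "p = d1 0 / k"
  define A where "A = f (E2 0)"
  define B where "B = d2 0"
  define ch2 where "ch2 = cosh (k/2)"
  define sh2 where "sh2 = sinh (k/2)"
  define che where "che = cosh (k*eps)"
  define she where "she = sinh (k*eps)"
  define P where "P = p * sh2"
  define T where "T = (\<Sum>j<m. ds j 0) / k"
  have u1: "f (E1 x) = p * sinh (k*x)" if "0 \<le> x" "x \<le> 1/2" for x
    using ode_neg[OF e1 k, of x] f0 that by (simp add: edge1_def p_def)
  have d1h: "d1 (1/2) = k * p * ch2"
    using ode_neg[OF e1 k, of "1/2"] f0 k by (simp add: edge1_def p_def ch2_def)
  have u2: "f (E2 x) = A * cosh (k*x) + B / k * sinh (k*x)" if "0 \<le> x" "x \<le> 1/2" for x
    using ode_neg[OF e2 k, of x] that by (simp add: edge2_def A_def B_def)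
  have dir: "A * ch2 + B / k * sh2 = 0"
    using u2[of "1/2"] f1 by (simp add: ch2_def sh2_def)
  have sj: "A = P * che + ds j 0 / k * she" if "j < m" for j
    using ode_neg[OF es[rule_format, OF that] k, of eps] e u1[of "1/2"]
    by (simp add: sedge_0 sedge_eps A_def P_def che_def she_def sh2_def)
  have dsj: "ds j eps = P * k * she + ds j 0 * che" if "j < m" for j
    using ode_neg[OF es[rule_format, OF that] k, of eps] e u1[of "1/2"]
    by (simp add: sedge_0 sedge_eps A_def P_def che_def she_def sh2_def)
  have T1: "T = p * ch2" using K1 d1h k by (simp add: T_def)
  have "(\<Sum>j<m. A) = (\<Sum>j<m. P * che + ds j 0 / k * she)"
    by (rule sum.cong) (auto simp: sj)
  then have sA: "m * A = m * P * che + she * T"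
    by (simp add: sum.distrib T_def sum_divide_distrib[symmetric] sum_distrib_left mult.commute)
  have "B = (\<Sum>j<m. ds j eps)" using K2 by (simp add: B_def sum_negf)
  also have "\<dots> = (\<Sum>j<m. P * k * she + ds j 0 * che)"
    by (rule sum.cong) (auto simp: dsj)
  finally have "B = m * P * k * she + che * (\<Sum>j<m. ds j 0)"
    by (simp add: sum.distrib sum_distrib_left mult.commute)
  then have sB: "B / k = m * P * she + che * T" using k by (simp add: T_def field_simps)
  have pos: "0 < sh2" "0 < ch2" "0 < she" "0 < che" "0 < real m"
    using k e m by (auto simp: sh2_def ch2_def she_def che_def)
  define K where "K = m * sh2 * che * ch2 + she * ch2 * ch2 + m * m * sh2 * she * sh2 + m * che * ch2 * sh2"
  have Kpos: "K > 0" unfolding K_def using pos by (intro add_pos_pos mult_pos_pos) auto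
  have "m * (A * ch2 + B / k * sh2) = (m * A) * ch2 + m * (B / k) * sh2" by (simp add: algebra_simps)
  also have "\<dots> = p * K" unfolding sA sB K_def P_def T1 by (simp add: algebra_simps)
  finally have "p * K = 0" using dir by simp
  then have p0: "p = 0" using Kpos by simp
  then have A0: "A = 0" using sA pos T1 P_def by simp
  then have B0: "B = 0" using dir sB pos T1 P_def p0 k by simp
  have ds0: "ds j 0 = 0" if "j < m" for j using sj[OF that] A0 P_def p0 pos k by simp
  show False
  proof (rule zero_on_gpoints[THEN notE, OF _ _ _ nz])
    show "f (E1 x) = 0" if "0 \<le> x" "x \<le> 1/2" for x using u1[OF that] p0 by simp
    show "f (E2 x) = 0" if "0 \<le> x" "x \<le> 1/2" for x using u2[OF that] A0 B0 by simp
    show "sedge eps f j y = 0" if "j < m" "0 < y" "y < eps" for j y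
      using ode_neg[OF es[rule_format, OF that(1)] k, of y] that ds0[OF that(1)] u1[of "1/2"] p0
      by (simp add: sedge_0)
  qed
qed

lemma no_zero:
  assumes m: "m \<ge> 1" and e: "eps > 0"
  shows "\<not> eigenfun m eps 0 f"
proof
  assume "eigenfun m eps 0 f"
  then obtain d1 d2 ds where nz: "\<exists>p\<in>gpoints m eps. f p \<noteq> 0" and f0: "f (E1 0) = 0"
    and f1: "f (E2 (1/2)) = 0"
    and e1: "edge_eq (1/2) 0 (edge1 f) d1" and e2: "edge_eq (1/2) 0 (edge2 f) d2"
    and es: "\<forall>j<m. edge_eq eps 0 (sedge eps f j) (ds j)"
    and K1: "- d1 (1/2) + (\<Sum>j<m. ds j 0) = 0" and K2: "(\<Sum>j<m. - ds j eps) + d2 0 = 0"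
    unfolding eigenfun_def by blast
  define p where "p = d1 0"
  define A where "A = f (E2 0)"
  define B where "B = d2 0"
  define T where "T = (\<Sum>j<m. ds j 0)"
  have u1: "f (E1 x) = p * x" if "0 \<le> x" "x \<le> 1/2" for x
    using ode_zero[OF e1, of x] f0 that by (simp add: edge1_def p_def)
  have d1h: "d1 (1/2) = p"
    using ode_zero[OF e1, of "1/2"] by (simp add: p_def)
  have u2: "f (E2 x) = A + B * x" if "0 \<le> x" "x \<le> 1/2" for x
    using ode_zero[OF e2, of x] that by (simp add: edge2_def A_def B_def)
  have dir: "A + B / 2 = 0"
    using u2[of "1/2"] f1 by simp
  have sj: "A = p / 2 + ds j 0 * eps" if "j < m" for j
    using ode_zero[OF es[rule_format, OF that], of eps] e u1[of "1/2"]
    by (simp add: sedge_0 sedge_eps A_def)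
  have dsj: "ds j eps = ds j 0" if "j < m" for j
    using ode_zero[OF es[rule_format, OF that], of eps] e by simp
  have T1: "T = p" using K1 d1h by (simp add: T_def)
  have "(\<Sum>j<m. A) = (\<Sum>j<m. p / 2 + ds j 0 * eps)"
    by (rule sum.cong) (auto simp: sj)
  then have sA: "m * A = m * p / 2 + eps * T"
    by (simp add: sum.distrib T_def sum_distrib_left mult.commute)
  have "B = (\<Sum>j<m. ds j eps)" using K2 by (simp add: B_def sum_negf)
  also have "\<dots> = T" unfolding T_def by (rule sum.cong) (auto simp: dsj)
  finally have sB: "B = p" using T1 by simp
  have "m * (A + B / 2) = p * (m + eps)" using sA sB T1 by (simp add: algebra_simps)
  then have p0: "p = 0" using dir m e by simp
  then have A0: "A = 0" using dir sB by simp
  have ds0: "ds j 0 = 0" if "j < m" for j using sj[OF that] A0 p0 e by simp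
  show False
  proof (rule zero_on_gpoints[THEN notE, OF _ _ _ nz])
    show "f (E1 x) = 0" if "0 \<le> x" "x \<le> 1/2" for x using u1[OF that] p0 by simp
    show "f (E2 x) = 0" if "0 \<le> x" "x \<le> 1/2" for x using u2[OF that] A0 sB p0 by simp
    show "sedge eps f j y = 0" if "j < m" "0 < y" "y < eps" for j y
      using ode_zero[OF es[rule_format, OF that(1)], of y] that ds0[OF that(1)] u1[of "1/2"] p0
      by (simp add: sedge_0)
  qed
qed

lemma eig_pos:
  assumes m: "m \<ge> 1" and e: "eps > 0" and ef: "eigenfun m eps lam f"
  shows "lam > 0"
proof (rule ccontr)
  assume "\<not> lam > 0"
  then consider "lam = 0" | "lam < 0" by linarith
  then show False
  proof cases
    case 1 then show False using no_zero[OF m e] ef by simp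
  next
    case 2
    define k where "k = sqrt (- lam)"
    have k: "k > 0" "lam = -(k^2)" using 2 by (auto simp: k_def)
    then show False using no_neg[OF m e k(1)] ef by simp
  qed
qed

lemma eig_structure:
  assumes m: "m \<ge> 1" and e: "eps > 0" and k: "k > 0" and ke: "k * eps < pi"
    and ef: "eigenfun m eps (k^2) f"
  shows "\<exists>(c::real) (d::real). c \<noteq> 0 \<and>
     c * cos (k/2) * sin (k*eps) / m = d * sin (k/2) - c * sin (k/2) * cos (k*eps) \<and>
     c * cos (k/2) * cos (k*eps) - m * c * sin (k/2) * sin (k*eps) + d * cos (k/2) = 0 \<and>
     (\<forall>x. 0 \<le> x \<longrightarrow> x \<le> 1/2 \<longrightarrow> f (E1 x) = c * sin (k*x)) \<and>
     (\<forall>x. 0 \<le> x \<longrightarrow> x \<le> 1/2 \<longrightarrow> f (E2 x) = d * sin (k*(1/2 - x))) \<and>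
     (\<forall>j y. j < m \<longrightarrow> 0 < y \<longrightarrow> y < eps \<longrightarrow>
        f (Sm j y) = c * (sin (k/2) * cos (k*y) + cos (k/2) / m * sin (k*y)))"
proof -
  from ef obtain d1 d2 ds where nz: "\<exists>p\<in>gpoints m eps. f p \<noteq> 0" and f0: "f (E1 0) = 0"
    and f1: "f (E2 (1/2)) = 0"
    and e1: "edge_eq (1/2) (k^2) (edge1 f) d1" and e2: "edge_eq (1/2) (k^2) (edge2 f) d2"
    and es: "\<forall>j<m. edge_eq eps (k^2) (sedge eps f j) (ds j)"
    and K1: "- d1 (1/2) + (\<Sum>j<m. ds j 0) = 0" and K2: "(\<Sum>j<m. - ds j eps) + d2 0 = 0"
    unfolding eigenfun_def by blast
  define S where "S = sin (k/2)"
  define C where "C = cos (k/2)"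
  define se where "se = sin (k*eps)"
  define ce where "ce = cos (k*eps)"
  define c where "c = d1 0 / k"
  define A where "A = f (E2 0)"
  define B where "B = d2 0"
  define d where "d = A * S - B / k * C"
  define P where "P = c * S"
  define beta where "beta = (d * S - c * S * ce) / se"
  have SC: "S^2 + C^2 = 1" unfolding S_def C_def by simp
  have sepos: "se > 0" unfolding se_def using k e ke by (intro sin_gt_zero) auto
  have u1: "f (E1 x) = c * sin (k*x)" if "0 \<le> x" "x \<le> 1/2" for x
    using ode_pos[OF e1 k, of x] f0 that by (simp add: edge1_def c_def)
  have d1h: "d1 (1/2) = k * c * C"
    using ode_pos[OF e1 k, of "1/2"] f0 k by (simp add: edge1_def c_def C_def)
  have u2: "f (E2 x) = A * cos (k*x) + B / k * sin (k*x)" if "0 \<le> x" "x \<le> 1/2" for x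
    using ode_pos[OF e2 k, of x] that by (simp add: edge2_def A_def B_def)
  have dir: "A * C + B / k * S = 0"
    using u2[of "1/2"] f1 by (simp add: C_def S_def)
  have dir': "B / k * S = - (A * C)" using dir by linarith
  have AdS: "A = d * S"
  proof -
    have "d * S = A * S^2 - (B / k * S) * C" by (simp add: d_def algebra_simps power2_eq_square)
    also have "\<dots> = A * S^2 + A * C * C" unfolding dir' by simp
    also have "\<dots> = A * (S^2 + C^2)" by (simp add: algebra_simps power2_eq_square)
    also have "\<dots> = A" using SC by simp
    finally show ?thesis by simp
  qed
  have BdC: "B / k = - d * C"
  proof -
    have "- d * C = - A * S * C + B / k * C^2" by (simp add: d_def algebra_simps power2_eq_square)
    also have "\<dots> = B / k * S * S + B / k * C^2"
      using arg_cong[OF dir', of "\<lambda>t. t * S"] by (simp add: algebra_simps)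
    also have "\<dots> = B / k * (S^2 + C^2)" by (simp add: algebra_simps power2_eq_square)
    also have "\<dots> = B / k" using SC by simp
    finally show ?thesis by simp
  qed
  have u2': "f (E2 x) = d * sin (k*(1/2 - x))" if "0 \<le> x" "x \<le> 1/2" for x
  proof -
    have "sin (k*(1/2 - x)) = S * cos (k*x) - C * sin (k*x)"
      unfolding S_def C_def by (simp add: right_diff_distrib sin_diff)
    moreover have "f (E2 x) = d * (S * cos (k*x) - C * sin (k*x))"
      unfolding u2[OF that] AdS BdC by (simp add: algebra_simps)
    ultimately show ?thesis by simp
  qed
  have sj: "A = P * ce + ds j 0 / k * se" if "j < m" for j
    using ode_pos[OF es[rule_format, OF that] k, of eps] e u1[of "1/2"]
    by (simp add: sedge_0 sedge_eps A_def P_def ce_def se_def S_def)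
  have bj: "ds j 0 / k = beta" if "j < m" for j
    using sj[OF that] sepos AdS unfolding beta_def P_def by (simp add: field_simps)
  have dsj: "ds j eps = - P * k * se + ds j 0 * ce" if "j < m" for j
    using ode_pos[OF es[rule_format, OF that] k, of eps] e u1[of "1/2"]
    by (simp add: sedge_0 sedge_eps A_def P_def ce_def se_def S_def)
  have sm: "sedge eps f j y = P * cos (k*y) + beta * sin (k*y)" if "j < m" "0 \<le> y" "y \<le> eps" for j y
    using ode_pos[OF es[rule_format, OF that(1)] k, of y] that u1[of "1/2"] bj[OF that(1)]
    by (simp add: sedge_0 P_def S_def)
  have "(\<Sum>j<m. ds j 0) = (\<Sum>j<m. k * beta)"
    by (rule sum.cong) (use bj k in \<open>auto simp: field_simps\<close>)
  then have mb: "m * beta = c * C" using K1 d1h k by simp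
  then have beta: "beta = c * C / m" using m by (simp add: field_simps)
  have "(\<Sum>j<m. ds j eps) = (\<Sum>j<m. - P * k * se + k * beta * ce)"
    by (rule sum.cong) (use bj k dsj in \<open>auto simp: field_simps\<close>)
  then have "B = m * (- P * k * se + k * beta * ce)" using K2 by (simp add: B_def sum_negf)
  also have "\<dots> = k * (m * (- P * se + beta * ce))" by (simp add: algebra_simps)
  finally have Bm: "B = k * (m * (- P * se + beta * ce))" .
  have Bk: "B = k * (- d * C)" using BdC k by (simp add: field_simps)
  have "k * (- d * C) = k * (m * (- P * se + beta * ce))" using Bm Bk by simp
  then have "- d * C = m * (- P * se + beta * ce)" using k by (subst (asm) mult_left_cancel) auto
  then have eq3: "c * C * ce - m * c * S * se + d * C = 0"
    using mb unfolding P_def by (simp add: algebra_simps)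
  have eq1: "c * C * se / m = d * S - c * S * ce"
    using beta sepos unfolding beta_def by (simp add: field_simps)
  have cnz: "c \<noteq> 0"
  proof
    assume c0: "c = 0"
    then have "d * S = 0" "d * C = 0" using eq1 eq3 by auto
    then have "d * (S^2 + C^2) = 0" by (auto simp add: algebra_simps power2_eq_square)
    then have d0: "d = 0" using SC by simp
    show False
    proof (rule zero_on_gpoints[THEN notE, OF _ _ _ nz])
      show "f (E1 x) = 0" if "0 \<le> x" "x \<le> 1/2" for x using u1[OF that] c0 by simp
      show "f (E2 x) = 0" if "0 \<le> x" "x \<le> 1/2" for x using u2'[OF that] d0 by simp
      show "sedge eps f j y = 0" if "j < m" "0 < y" "y < eps" for j y
        using sm[of j y] that beta c0 unfolding P_def by simp
    qed
  qed
  have sm': "f (Sm j y) = c * (sin (k/2) * cos (k*y) + cos (k/2) / m * sin (k*y))"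
    if "j < m" "0 < y" "y < eps" for j y
    using sm[of j y] that sedge_int[of y eps f j] beta unfolding P_def S_def C_def
    by (simp add: algebra_simps)
  show ?thesis
    apply (rule exI[of _ c], rule exI[of _ d])
    using cnz eq1 eq3 u1 u2' sm' unfolding S_def C_def se_def ce_def by blast
qed

definition phi :: "nat \<Rightarrow> real \<Rightarrow> real \<Rightarrow> real" where
  "phi m eps b = cos b * cos (eps*b) - m * sin b * sin (eps*b)"

definition chi :: "nat \<Rightarrow> real \<Rightarrow> real \<Rightarrow> real" where
  "chi m eps b = cos b * sin (eps*b) + m * sin b * cos (eps*b)"

lemma root:
  fixes c d :: real
  assumes m: "m \<ge> 1" and c: "c \<noteq> 0"
    and eq1: "c * cos (k/2) * sin (k*eps) / m = d * sin (k/2) - c * sin (k/2) * cos (k*eps)"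
    and eq3: "c * cos (k/2) * cos (k*eps) - m * c * sin (k/2) * sin (k*eps) + d * cos (k/2) = 0"
  shows "phi m eps (k/2) * chi m eps (k/2) = 0"
proof -
  define S where "S = sin (k/2)"
  define C where "C = cos (k/2)"
  define sa where "sa = sin (eps*(k/2))"
  define ca where "ca = cos (eps*(k/2))"
  define s where "s = sin (k*eps)"
  define ce where "ce = cos (k*eps)"
  define M where "M = real m"
  have M: "M > 0" using m by (simp add: M_def)
  have s2: "s = 2 * sa * ca" unfolding s_def sa_def ca_def
    using sin_double[of "eps*(k/2)"] by (simp add: algebra_simps)
  have c2: "ce = ca^2 - sa^2" unfolding ce_def sa_def ca_def
    using cos_double[of "eps*(k/2)"] by (simp add: algebra_simps)
  have e1: "c * C * s = M * (d * S - c * S * ce)"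
    using eq1 M unfolding S_def C_def s_def ce_def M_def by (simp add: field_simps)
  have e3: "c * C * ce - M * c * S * s + d * C = 0"
    using eq3 unfolding S_def C_def s_def ce_def M_def by simp
  have "c * (C^2 * s + 2 * M * S * C * ce - M^2 * S^2 * s) = 0"
    using e1 e3 by algebra
  then have "C^2 * s + 2 * M * S * C * ce - M^2 * S^2 * s = 0" using c by simp
  then have "2 * ((C * ca - M * S * sa) * (C * sa + M * S * ca)) = 0"
    unfolding s2 c2 by algebra
  then show ?thesis unfolding phi_def chi_def S_def C_def sa_def ca_def M_def
    by (simp add: algebra_simps)
qed

lemma core_cos:
  fixes t t' u u' :: real
  assumes "0 \<le> t" "t < t'" "t' \<le> pi/2" "0 \<le> u" "u < u'" "u' \<le> pi/2"
  shows "cos t' * cos u' < cos t * cos u"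
proof -
  have a: "cos t' < cos t" using assms by (subst cos_mono_less_eq) auto
  have b: "cos u' \<le> cos u" using assms by (subst cos_mono_le_eq) auto
  have c: "cos t' \<ge> 0" "cos u > 0" using assms by (auto intro!: cos_ge_zero cos_gt_zero_pi)
  have "cos t' * cos u' \<le> cos t' * cos u" using b c by (intro mult_left_mono) auto
  also have "\<dots> < cos t * cos u" using a c by (intro mult_strict_right_mono) auto
  finally show ?thesis .
qed

lemma core_sin:
  fixes t t' u u' :: real
  assumes "0 \<le> t" "t < t'" "t' \<le> pi/2" "0 \<le> u" "u < u'" "u' \<le> pi/2"
  shows "sin t * sin u < sin t' * sin u'"
proof -
  have a: "sin t < sin t'" using assms by (subst sin_mono_less_eq) auto
  have b: "sin u \<le> sin u'" using assms by (subst sin_mono_le_eq) auto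
  have c: "sin t \<ge> 0" "sin u' > 0" using assms by (auto intro!: sin_ge_zero sin_gt_zero)
  have "sin t * sin u \<le> sin t * sin u'" using b c by (intro mult_left_mono) auto
  also have "\<dots> < sin t' * sin u'" using a c by (intro mult_strict_right_mono) auto
  finally show ?thesis .
qed

context
  fixes m :: nat and eps :: real
  assumes m: "m \<ge> 1" and e: "0 < eps" "eps \<le> 1/4"
begin

lemma epsb: "0 \<le> b \<Longrightarrow> b \<le> 3*pi/2 \<Longrightarrow> 0 \<le> eps * b \<and> eps * b \<le> 3*pi/8"
proof -
  assume "0 \<le> b" "b \<le> 3*pi/2"
  moreover have "eps * b \<le> 1/4 * (3*pi/2)" using e \<open>0 \<le> b\<close> \<open>b \<le> 3*pi/2\<close>
    by (intro mult_mono) auto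
  ultimately show ?thesis using e by auto
qed

lemma epsb_pos: "0 < b \<Longrightarrow> b \<le> 3*pi/2 \<Longrightarrow> 0 < sin (eps*b) \<and> 0 < cos (eps*b)"
proof -
  assume b: "0 < b" "b \<le> 3*pi/2"
  have "0 < eps * b" using b e by simp
  then show ?thesis using epsb[of b] b pi_gt3 by (auto intro!: sin_gt_zero cos_gt_zero_pi)
qed

lemma phi_dec: "0 \<le> x \<Longrightarrow> x < y \<Longrightarrow> y \<le> pi/2 \<Longrightarrow> phi m eps y < phi m eps x"
proof -
  assume xy: "0 \<le> x" "x < y" "y \<le> pi/2"
  have u: "0 \<le> eps*x" "eps*x < eps*y" "eps*y \<le> pi/2" using epsb[of y] xy e pi_gt3 by auto
  have A: "cos y * cos (eps*y) < cos x * cos (eps*x)" by (rule core_cos) (use xy u in auto)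
  have B: "sin x * sin (eps*x) < sin y * sin (eps*y)" by (rule core_sin) (use xy u in auto)
  have B': "m * (sin x * sin (eps*x)) < m * (sin y * sin (eps*y))" using B m by simp
  show ?thesis unfolding phi_def using A B' by (simp add: mult.assoc)
qed

lemma phi_inc: "pi \<le> x \<Longrightarrow> x < y \<Longrightarrow> y \<le> 3*pi/2 \<Longrightarrow> phi m eps x < phi m eps y"
proof -
  assume xy: "pi \<le> x" "x < y" "y \<le> 3*pi/2"
  have u: "0 \<le> eps*x" "eps*x < eps*y" "eps*y \<le> pi/2" using epsb[of y] epsb[of x] xy e pi_gt3 by auto
  have A0: "cos (y-pi) * cos (eps*y) < cos (x-pi) * cos (eps*x)" by (rule core_cos) (use xy u in auto)
  have B0: "sin (x-pi) * sin (eps*x) < sin (y-pi) * sin (eps*y)" by (rule core_sin) (use xy u in auto)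
  have r: "cos (x-pi) = - cos x" "cos (y-pi) = - cos y" "sin (x-pi) = - sin x" "sin (y-pi) = - sin y"
    by (simp_all add: cos_diff sin_diff)
  have A: "cos x * cos (eps*x) < cos y * cos (eps*y)" using A0 unfolding r by simp
  have B: "sin y * sin (eps*y) < sin x * sin (eps*x)" using B0 unfolding r by simp
  have B': "m * (sin y * sin (eps*y)) < m * (sin x * sin (eps*x))" using B m by simp
  show ?thesis unfolding phi_def using A B' by (simp add: mult.assoc)
qed

lemma chi_dec: "pi/2 \<le> x \<Longrightarrow> x < y \<Longrightarrow> y \<le> pi \<Longrightarrow> chi m eps y < chi m eps x"
proof -
  assume xy: "pi/2 \<le> x" "x < y" "y \<le> pi"
  have u: "0 \<le> eps*x" "eps*x < eps*y" "eps*y \<le> pi/2" using epsb[of y] epsb[of x] xy e pi_gt3 by auto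
  have A0: "cos (y-pi/2) * cos (eps*y) < cos (x-pi/2) * cos (eps*x)" by (rule core_cos) (use xy u in auto)
  have B0: "sin (x-pi/2) * sin (eps*x) < sin (y-pi/2) * sin (eps*y)" by (rule core_sin) (use xy u in auto)
  have r: "cos (x-pi/2) = sin x" "cos (y-pi/2) = sin y" "sin (x-pi/2) = - cos x" "sin (y-pi/2) = - cos y"
    by (simp_all add: cos_diff sin_diff)
  have A: "sin y * cos (eps*y) < sin x * cos (eps*x)" using A0 unfolding r by simp
  have B: "cos y * sin (eps*y) < cos x * sin (eps*x)" using B0 unfolding r by simp
  have A': "m * (sin y * cos (eps*y)) < m * (sin x * cos (eps*x))" using A m by simp
  show ?thesis unfolding chi_def using A' B by (simp add: mult.assoc)
qed

lemma phi_neg: "pi/2 \<le> b \<Longrightarrow> b \<le> pi \<Longrightarrow> phi m eps b < 0"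
proof -
  assume b: "pi/2 \<le> b" "b \<le> pi"
  have bb: "0 < b" "b \<le> 3*pi/2" using b pi_gt3 by linarith+
  have p: "0 < sin (eps*b)" "0 < cos (eps*b)" using epsb_pos[OF bb] by auto
  have "cos b = - sin (b - pi/2)" by (simp add: sin_diff)
  moreover have "sin (b - pi/2) \<ge> 0" using b by (intro sin_ge_zero) auto
  ultimately have cb: "cos b \<le> 0" by simp
  have sb: "sin b \<ge> 0" using b by (intro sin_ge_zero) auto
  show ?thesis
  proof (cases "cos b = 0")
    case True
    then have "(sin b)^2 = 1" using sin_cos_squared_add[of b] by simp
    then have "sin b = 1" using sb by (auto simp: power2_eq_1_iff)
    have "m * sin b * sin (eps*b) > 0" using p m \<open>sin b = 1\<close> by simp
    then show ?thesis unfolding phi_def using True by simp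
  next
    case False
    then have "cos b < 0" using cb by linarith
    then have "cos b * cos (eps*b) < 0" using p(2) by (rule mult_neg_pos)
    moreover have "m * sin b * sin (eps*b) \<ge> 0" using sb p(1) by (intro mult_nonneg_nonneg) auto
    ultimately show ?thesis unfolding phi_def by simp
  qed
qed

lemma chi_pos: "0 < b \<Longrightarrow> b \<le> pi/2 \<Longrightarrow> chi m eps b > 0"
proof -
  assume b: "0 < b" "b \<le> pi/2"
  have bb: "0 < b" "b \<le> 3*pi/2" using b pi_gt3 by linarith+
  have p: "0 < sin (eps*b)" "0 < cos (eps*b)" using epsb_pos[OF bb] by auto
  have cb: "cos b \<ge> 0" using b by (intro cos_ge_zero) auto
  have sb: "sin b > 0" using b pi_gt3 by (intro sin_gt_zero) auto
  have "cos b * sin (eps*b) \<ge> 0" using cb p(1) by simp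
  moreover have "m * sin b * cos (eps*b) > 0" using sb p(2) m by simp
  ultimately show ?thesis unfolding chi_def by simp
qed

lemma chi_neg: "pi \<le> b \<Longrightarrow> b \<le> 3*pi/2 \<Longrightarrow> chi m eps b < 0"
proof -
  assume b: "pi \<le> b" "b \<le> 3*pi/2"
  have bb: "0 < b" "b \<le> 3*pi/2" using b pi_gt3 by linarith+
  have p: "0 < sin (eps*b)" "0 < cos (eps*b)" using epsb_pos[OF bb] by auto
  have r: "cos b = - cos (b - pi)" "sin b = - sin (b - pi)" by (simp_all add: cos_diff sin_diff)
  have ct: "cos (b - pi) \<ge> 0" using b by (intro cos_ge_zero) auto
  have st: "sin (b - pi) \<ge> 0" using b by (intro sin_ge_zero) auto
  have cb: "cos b \<le> 0" "sin b \<le> 0" using r ct st by auto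
  show ?thesis
  proof (cases "cos b = 0")
    case True
    then have "(sin b)^2 = 1" using sin_cos_squared_add[of b] by simp
    then have s1: "sin b = -1" using cb by (auto simp: power2_eq_1_iff)
    have "m * sin b * cos (eps*b) < 0" using p m s1 by simp
    then show ?thesis unfolding chi_def using True by simp
  next
    case False
    then have "cos b < 0" using cb by linarith
    then have "cos b * sin (eps*b) < 0" using p(1) by (rule mult_neg_pos)
    moreover have "sin b * cos (eps*b) \<le> 0" using cb(2) p(2) by (intro mult_nonpos_nonneg) auto
    then have "m * (sin b * cos (eps*b)) \<le> 0" by (rule mult_nonneg_nonpos[OF of_nat_0_le_iff])
    ultimately show ?thesis unfolding chi_def by (simp add: mult.assoc)
  qed
qed

lemma cont_phi: "isCont (phi m eps) x"
  unfolding phi_def[abs_def] by (intro continuous_intros)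

lemma cont_chi: "isCont (chi m eps) x"
  unfolding chi_def[abs_def] by (intro continuous_intros)

lemma root1: "\<exists>b. 0 < b \<and> b < pi/2 \<and> phi m eps b = 0"
proof -
  have p0: "phi m eps 0 = 1" unfolding phi_def by simp
  have "0 < sin (eps * (pi/2))" using epsb_pos[of "pi/2"] pi_gt3 by auto
  then have p1: "phi m eps (pi/2) < 0" unfolding phi_def using m by simp
  obtain b where b: "0 \<le> b" "b \<le> pi/2" "phi m eps b = 0"
    using IVT2[of "phi m eps" "pi/2" 0 0] p0 p1 cont_phi by auto
  moreover have "b \<noteq> 0" using p0 b by auto
  moreover have "b \<noteq> pi/2" proof assume h: "b = pi/2" show False using p1 b(3) unfolding h by simp qed
  ultimately show ?thesis by (intro exI[of _ b]) auto
qed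

lemma root2: "\<exists>b. pi/2 < b \<and> b < pi \<and> chi m eps b = 0"
proof -
  have "0 < cos (eps * (pi/2))" using epsb_pos[of "pi/2"] pi_gt3 by auto
  then have p0: "chi m eps (pi/2) > 0" unfolding chi_def using m by simp
  have "0 < sin (eps * pi)" using epsb_pos[of "pi"] pi_gt3 by auto
  then have p1: "chi m eps pi < 0" unfolding chi_def using m by simp
  obtain b where b: "pi/2 \<le> b" "b \<le> pi" "chi m eps b = 0"
    using IVT2[of "chi m eps" "pi" 0 "pi/2"] p0 p1 cont_chi by auto
  moreover have "b \<noteq> pi" using p1 b by auto
  moreover have "b \<noteq> pi/2" proof assume h: "b = pi/2" show False using p0 b(3) unfolding h by simp qed
  ultimately show ?thesis by (intro exI[of _ b]) auto
qed

lemma root3: "\<exists>b. pi < b \<and> b < 3*pi/2 \<and> phi m eps b = 0"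
proof -
  have "0 < cos (eps * pi)" using epsb_pos[of "pi"] pi_gt3 by auto
  then have p0: "phi m eps pi < 0" unfolding phi_def by simp
  have "0 < sin (eps * (3*pi/2))" using epsb_pos[of "3*pi/2"] pi_gt3 by auto
  moreover have "cos (3*pi/2) = 0" "sin (3*pi/2) = -1"
    using cos_add[of pi "pi/2"] sin_add[of pi "pi/2"] by (simp_all add: field_simps)
  ultimately have p1: "phi m eps (3*pi/2) > 0" unfolding phi_def using m by simp
  obtain b where b: "pi \<le> b" "b \<le> 3*pi/2" "phi m eps b = 0"
    using IVT[of "phi m eps" "pi" 0 "3*pi/2"] p0 p1 cont_phi pi_gt3 by auto
  moreover have "b \<noteq> pi" using p0 b by auto
  moreover have "b \<noteq> 3*pi/2" proof assume h: "b = 3*pi/2" show False using p1 b(3) unfolding h by simp qed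
  ultimately show ?thesis by (intro exI[of _ b]) auto
qed

lemma phi_uniq1: "0 \<le> x \<Longrightarrow> x \<le> pi/2 \<Longrightarrow> 0 \<le> y \<Longrightarrow> y \<le> pi/2 \<Longrightarrow>
   phi m eps x = 0 \<Longrightarrow> phi m eps y = 0 \<Longrightarrow> x = y"
  using phi_dec[of x y] phi_dec[of y x] by (cases x y rule: linorder_cases) auto

lemma phi_uniq3: "pi \<le> x \<Longrightarrow> x \<le> 3*pi/2 \<Longrightarrow> pi \<le> y \<Longrightarrow> y \<le> 3*pi/2 \<Longrightarrow>
   phi m eps x = 0 \<Longrightarrow> phi m eps y = 0 \<Longrightarrow> x = y"
  using phi_inc[of x y] phi_inc[of y x] by (cases x y rule: linorder_cases) auto

lemma chi_uniq2: "pi/2 \<le> x \<Longrightarrow> x \<le> pi \<Longrightarrow> pi/2 \<le> y \<Longrightarrow> y \<le> pi \<Longrightarrow>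
   chi m eps x = 0 \<Longrightarrow> chi m eps y = 0 \<Longrightarrow> x = y"
  using chi_dec[of x y] chi_dec[of y x] by (cases x y rule: linorder_cases) auto

end

definition Fn :: "nat \<Rightarrow> real \<Rightarrow> real \<Rightarrow> gpoint \<Rightarrow> real" where
  "Fn m sg k p = (case p of E1 x \<Rightarrow> sin (k*x) | E2 x \<Rightarrow> sg * sin (k*(1/2 - x))
     | Sm j y \<Rightarrow> sin (k/2) * cos (k*y) + cos (k/2) / m * sin (k*y))"

lemma construct:
  assumes m: "m \<ge> 1" and e: "eps > 0" and k: "k > 0"
    and cont: "sin (k/2) * cos (k*eps) + cos (k/2) / m * sin (k*eps) = sg * sin (k/2)"
    and kir: "m * sin (k/2) * sin (k*eps) = cos (k/2) * (cos (k*eps) + sg)"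
  shows "eigenfun m eps (k^2) (Fn m sg k)"
proof -
  define F where "F = Fn m sg k"
  define S where "S = sin (k/2)"
  define C where "C = cos (k/2)"
  define g where "g y = S * cos (k*y) + C / m * sin (k*y)" for y
  define d1 where "d1 x = k * cos (k*x)" for x
  define d2 where "d2 x = - sg * k * cos (k*(1/2 - x))" for x
  define ds where "ds j y = k * (- S * sin (k*y) + C / m * cos (k*y))" for j :: nat and y
  have M: "real m > 0" using m by simp
  define x0 where "x0 = min (1/2) (pi / (2*k))"
  have x0: "0 < x0" "x0 \<le> 1/2" "k * x0 \<le> pi/2" using k
    by (auto simp: x0_def min_def field_simps)
  have "k * x0 < pi" using x0(3) pi_gt_zero by linarith
  moreover have "0 < k * x0" using k x0 by simp
  ultimately have "sin (k * x0) > 0" by (intro sin_gt_zero)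
  then have nz: "\<exists>p\<in>gpoints m eps. F p \<noteq> 0"
    using x0 by (intro bexI[of _ "E1 x0"]) (auto simp: F_def Fn_def gpoints_def)
  have ed1: "edge1 F = (\<lambda>x. sin (k*x))" by (auto simp: edge1_def F_def Fn_def)
  have ed2: "edge2 F = (\<lambda>x. sg * sin (k*(1/2 - x)))" by (auto simp: edge2_def F_def Fn_def)
  have E1: "edge_eq (1/2) (k^2) (edge1 F) d1"
    unfolding edge_eq_def ed1 d1_def
    by (auto intro!: derivative_eq_intros simp: power2_eq_square algebra_simps)
  have E2: "edge_eq (1/2) (k^2) (edge2 F) d2"
    unfolding edge_eq_def ed2 d2_def
    by (auto intro!: derivative_eq_intros simp: power2_eq_square algebra_simps)
  have sg_eq: "sedge eps F j y = g y" if "0 \<le> y" "y \<le> eps" for j y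
  proof -
    have "y = 0 \<or> (0 < y \<and> y < eps) \<or> y = eps" using that by linarith
    then consider "y = 0" | "0 < y \<and> y < eps" | "y = eps" by blast
    then show ?thesis
    proof cases
      case 1 then show ?thesis by (simp add: sedge_def F_def Fn_def g_def S_def)
    next
      case 2 then show ?thesis by (simp add: sedge_def F_def Fn_def g_def S_def C_def)
    next
      case 3 then show ?thesis using e cont by (simp add: sedge_def F_def Fn_def g_def S_def C_def)
    qed
  qed
  have dg: "(g has_real_derivative ds j y) (at y within {0..eps})" for j y
    unfolding g_def[abs_def] ds_def using M by (auto intro!: derivative_eq_intros simp: algebra_simps)
  have dds: "(ds j has_real_derivative (- (k^2) * g y)) (at y within {0..eps})" for j y
    unfolding g_def ds_def using M by (auto intro!: derivative_eq_intros simp: algebra_simps power2_eq_square)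
  have ES: "edge_eq eps (k^2) (sedge eps F j) (ds j)" for j
    unfolding edge_eq_def
  proof (intro conjI ballI)
    fix y assume y: "y \<in> {0..eps}"
    show "(sedge eps F j has_real_derivative ds j y) (at y within {0..eps})"
      by (rule has_field_derivative_transform_within[OF dg, of 1]) (use y sg_eq in auto)
    show "(ds j has_real_derivative (- (k^2) * sedge eps F j y)) (at y within {0..eps})"
      using dds[of j y] sg_eq[of y j] y by auto
  qed
  have K1: "- d1 (1/2) + (\<Sum>j<m. ds j 0) = 0"
    using M by (simp add: d1_def ds_def C_def)
  have "(\<Sum>j<m. - ds j eps) + d2 0 = m * (- ds 0 eps) + d2 0" by (simp add: ds_def)
  also have "\<dots> = k * (m * S * sin (k*eps) - C * (cos (k*eps) + sg))"
    using M by (simp add: ds_def d2_def S_def C_def algebra_simps)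
  also have "\<dots> = 0" using kir by (simp add: S_def C_def)
  finally have K2: "(\<Sum>j<m. - ds j eps) + d2 0 = 0" .
  have "F (E1 0) = 0" "F (E2 (1/2)) = 0" by (simp_all add: F_def Fn_def)
  then show ?thesis unfolding eigenfun_def F_def[symmetric] using nz E1 E2 ES K1 K2 by blast
qed

lemma sym_ids:
  fixes M S C a :: real
  assumes M: "M > 0" and ca: "cos a > 0" and ph: "C * cos a = M * S * sin a"
  shows "S * cos (2*a) + C / M * sin (2*a) = S"
    and "M * S * sin (2*a) = C * (cos (2*a) + 1)"
    and "S * cos t + C / M * sin t = S * cos (t - a) / cos a"
proof -
  define CM where "CM = C / M"
  have C: "C = M * CM" using M by (simp add: CM_def)
  have h: "CM * cos a = S * sin a" using ph M unfolding C by (simp add: mult.assoc)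
  have pyth: "sin a ^ 2 + cos a ^ 2 = 1" by simp
  have s2: "sin (2*a) = 2 * sin a * cos a" by (rule sin_double)
  have c2: "cos (2*a) = cos a ^ 2 - sin a ^ 2" by (rule cos_double)
  show "S * cos (2*a) + C / M * sin (2*a) = S"
    unfolding CM_def[symmetric] s2 c2 using h pyth by algebra
  show "M * S * sin (2*a) = C * (cos (2*a) + 1)"
    unfolding C s2 c2 using h pyth by algebra
  have "(S * cos t + CM * sin t) * cos a = S * cos (t - a)"
    unfolding cos_diff using h by algebra
  then show "S * cos t + C / M * sin t = S * cos (t - a) / cos a"
    using ca unfolding CM_def by (simp add: field_simps)
qed

lemma asym_ids:
  fixes M S C a :: real
  assumes M: "M > 0" and sa: "sin a > 0" and ch: "C * sin a = - M * S * cos a"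
  shows "S * cos (2*a) + C / M * sin (2*a) = - S"
    and "M * S * sin (2*a) = C * (cos (2*a) - 1)"
    and "S * cos t + C / M * sin t = S * sin (a - t) / sin a"
proof -
  define CM where "CM = C / M"
  have C: "C = M * CM" using M by (simp add: CM_def)
  have "M * (CM * sin a + S * cos a) = 0" using ch unfolding C by (simp add: algebra_simps)
  then have "CM * sin a + S * cos a = 0" using M by simp
  then have h: "CM * sin a = - S * cos a" by simp
  have pyth: "sin a ^ 2 + cos a ^ 2 = 1" by simp
  have s2: "sin (2*a) = 2 * sin a * cos a" by (rule sin_double)
  have c2: "cos (2*a) = cos a ^ 2 - sin a ^ 2" by (rule cos_double)
  show "S * cos (2*a) + C / M * sin (2*a) = - S"
    unfolding CM_def[symmetric] s2 c2 using h pyth by algebra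
  show "M * S * sin (2*a) = C * (cos (2*a) - 1)"
    unfolding C s2 c2 using h pyth by algebra
  have "(S * cos t + CM * sin t) * sin a = S * sin (a - t)"
    unfolding sin_diff using h by algebra
  then show "S * cos t + C / M * sin t = S * sin (a - t) / sin a"
    using sa unfolding CM_def by (simp add: field_simps)
qed

lemma at_root_form:
  assumes m: "m \<ge> 1" and e: "0 < eps" "eps \<le> 1/4" and b: "0 < b" "b \<le> 3*pi/2" and Sb: "sin b \<noteq> 0"
    and cont: "sin b * cos (2*(eps*b)) + cos b / m * sin (2*(eps*b)) = sg * sin b"
    and ef: "eigenfun m eps ((2*b)^2) f"
  shows "\<exists>c. c \<noteq> 0 \<and> (\<forall>p\<in>gpoints m eps. f p = c * Fn m sg (2*b) p)"
proof -
  have k: "2*b > 0" using b by simp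
  have "2*b*eps \<le> (3*pi) * (1/4)" using b e pi_gt_zero by (intro mult_mono[of "2*b" "3*pi" eps "1/4"]) auto
  then have ke: "2*b*eps < pi" using pi_gt_zero by linarith
  obtain c d where cd: "c \<noteq> 0"
     "c * cos (2*b/2) * sin (2*b*eps) / m = d * sin (2*b/2) - c * sin (2*b/2) * cos (2*b*eps)"
     "\<forall>x. 0 \<le> x \<longrightarrow> x \<le> 1/2 \<longrightarrow> f (E1 x) = c * sin (2*b*x)"
     "\<forall>x. 0 \<le> x \<longrightarrow> x \<le> 1/2 \<longrightarrow> f (E2 x) = d * sin (2*b*(1/2 - x))"
     "\<forall>j y. j < m \<longrightarrow> 0 < y \<longrightarrow> y < eps \<longrightarrow>
        f (Sm j y) = c * (sin (2*b/2) * cos (2*b*y) + cos (2*b/2) / m * sin (2*b*y))"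
    using eig_structure[OF m e(1) k ke ef] by blast
  have r: "2*b/2 = b" "2*b*eps = 2*(eps*b)" by simp_all
  have "d * sin b = c * (sin b * cos (2*(eps*b)) + cos b / m * sin (2*(eps*b)))"
    using cd(2) unfolding r by (simp add: algebra_simps)
  also have "\<dots> = c * sg * sin b" using cont by simp
  finally have "d = c * sg" using Sb by simp
  then have "\<forall>p\<in>gpoints m eps. f p = c * Fn m sg (2*b) p"
    using cd(3,4,5) unfolding r by (auto elim!: gp_cases simp: Fn_def)
  then show ?thesis using cd(1) by blast
qed

lemma at_root:
  assumes m: "m \<ge> 1" and e: "0 < eps" "eps \<le> 1/4" and b: "0 < b" "b \<le> 3*pi/2" and Sb: "sin b \<noteq> 0"
    and cont: "sin b * cos (2*(eps*b)) + cos b / m * sin (2*(eps*b)) = sg * sin b"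
    and kir: "m * sin b * sin (2*(eps*b)) = cos b * (cos (2*(eps*b)) + sg)"
  shows "simple_eigenval m eps ((2*b)^2)"
proof -
  have r: "2*b/2 = b" "2*b*eps = 2*(eps*b)" by simp_all
  have "eigenfun m eps ((2*b)^2) (Fn m sg (2*b))"
    by (rule construct) (use m e b cont kir in \<open>simp_all add: r\<close>)
  then have ev: "eigenval m eps ((2*b)^2)" unfolding eigenval_def by blast
  have "\<exists>c. \<forall>p\<in>gpoints m eps. f p = c * g p"
    if f: "eigenfun m eps ((2*b)^2) f" and g: "eigenfun m eps ((2*b)^2) g" for f g
  proof -
    obtain c where c: "\<forall>p\<in>gpoints m eps. f p = c * Fn m sg (2*b) p"
      using at_root_form[OF m e b Sb cont f] by blast
    obtain c' where c': "c' \<noteq> 0" "\<forall>p\<in>gpoints m eps. g p = c' * Fn m sg (2*b) p"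
      using at_root_form[OF m e b Sb cont g] by blast
    have "\<forall>p\<in>gpoints m eps. f p = (c / c') * g p" using c c' by auto
    then show ?thesis by blast
  qed
  then show ?thesis unfolding simple_eigenval_def using ev by blast
qed

lemma psi_gp: "p \<in> gpoints m eps \<Longrightarrow> psi eps p \<in> gpoints m eps"
  by (erule gp_cases) (auto simp: gpoints_def)
lemma transfer_zero:
  fixes f g :: "gpoint \<Rightarrow> real" and c :: real
  assumes "\<forall>p\<in>gpoints m eps. f p = c * g p" "c \<noteq> 0"
  shows "zero_set m eps f = zero_set m eps g"
  using assms unfolding zero_set_def by auto

lemma transfer_sym:
  fixes f g :: "gpoint \<Rightarrow> real" and c s :: real
  assumes "\<forall>p\<in>gpoints m eps. f p = c * g p"
    and "\<forall>p\<in>gpoints m eps. g (psi eps p) = s * g p"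
  shows "\<forall>p\<in>gpoints m eps. f (psi eps p) = s * f p"
proof
  fix p assume p: "p \<in> gpoints m eps"
  have "f (psi eps p) = c * g (psi eps p)" using assms(1) psi_gp[OF p] by blast
  also have "\<dots> = c * (s * g p)" using assms(2) p by simp
  also have "\<dots> = s * f p" using assms(1) p by (simp add: ac_simps)
  finally show "f (psi eps p) = s * f p" .
qed

lemma sin_zero_02pi: "0 < t \<Longrightarrow> t < 2*pi \<Longrightarrow> sin t = 0 \<Longrightarrow> t = pi"
proof (rule ccontr)
  assume t: "0 < t" "t < 2*pi" "sin t = 0" "t \<noteq> pi"
  then consider "t < pi" | "pi < t" by linarith
  then show False
  proof cases
    case 1 then show False using t sin_gt_zero[of t] by simp
  next
    case 2
    have "sin t = - sin (t - pi)" by (simp add: sin_diff)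
    moreover have "sin (t - pi) > 0" using 2 t by (intro sin_gt_zero) auto
    ultimately show False using t by simp
  qed
qed

context
  fixes m :: nat and eps :: real
  assumes m: "m \<ge> 1" and e: "0 < eps" "eps \<le> 1/4"
begin

lemma asym_root_facts:
  assumes b: "pi/2 < b" "b < pi" and ch: "chi m eps b = 0"
  shows "\<forall>p\<in>gpoints m eps. Fn m (-1) (2*b) (psi eps p) = (-1) * Fn m (-1) (2*b) p"
    and "zero_set m eps (Fn m (-1) (2*b)) = (\<lambda>j. Sm j (eps/2)) ` {..<m}"
proof -
  define a where "a = eps * b"
  define k where "k = 2 * b"
  have bb: "0 < b" "b \<le> 3*pi/2" using b by auto
  have sc: "0 < sin a" "0 < cos a" using epsb_pos[OF m e bb] unfolding a_def by auto
  have a_le: "a \<le> 3*pi/8" using epsb[OF m e, of b] bb unfolding a_def by auto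
  have M: "real m > 0" using m by simp
  have S: "sin b > 0" using b by (intro sin_gt_zero) auto
  have chv: "cos b * sin a = - real m * sin b * cos a" using ch unfolding chi_def a_def by (simp add: algebra_simps)
  have G: "sin b * cos t + cos b / m * sin t = sin b * sin (a - t) / sin a" for t
    by (rule asym_ids(3)[OF M sc(1) chv])
  have Fsm: "Fn m (-1) k (Sm j y) = sin b * sin (a - k*y) / sin a" for j y
    unfolding Fn_def k_def using G by simp
  have ke: "k * eps = 2 * a" unfolding k_def a_def by simp
  show "\<forall>p\<in>gpoints m eps. Fn m (-1) (2*b) (psi eps p) = (-1) * Fn m (-1) (2*b) p"
  proof
    fix p assume "p \<in> gpoints m eps"
    then show "Fn m (-1) (2*b) (psi eps p) = (-1) * Fn m (-1) (2*b) p"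
    proof (cases rule: gp_cases)
      case (1 x)
      have "1/2 - (1/2 - x) = x" by simp
      then show ?thesis unfolding 1 psi.simps Fn_def gpoint.case by simp
    next
      case (2 x)
      have "1/2 - (1/2 - x) = x" by simp
      then show ?thesis unfolding 2 psi.simps Fn_def gpoint.case by simp
    next
      case (3 j y)
      have h: "a - k * (eps - y) = - (a - k*y)" using ke by (simp add: algebra_simps)
      have "sin (a - k * (eps - y)) = - sin (a - k*y)" unfolding h by (rule sin_minus)
      then show ?thesis unfolding 3 k_def[symmetric] psi.simps Fsm by simp
    qed
  qed
  show "zero_set m eps (Fn m (-1) (2*b)) = (\<lambda>j. Sm j (eps/2)) ` {..<m}"
  proof (intro equalityI subsetI)
    fix p assume p: "p \<in> zero_set m eps (Fn m (-1) (2*b))"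
    then have pg: "p \<in> gpoints m eps" and pn: "p \<noteq> E1 0" "p \<noteq> E2 (1/2)"
      and pz: "Fn m (-1) k p = 0" unfolding zero_set_def k_def by auto
    from pg show "p \<in> (\<lambda>j. Sm j (eps/2)) ` {..<m}"
    proof (cases rule: gp_cases)
      case (1 x)
      then have "0 < x" using pn by auto
      have "k * x \<le> k * (1/2)" using 1 bb unfolding k_def by (intro mult_left_mono) auto
      also have "k * (1/2) = b" unfolding k_def by simp
      finally have "k * x < pi" using b by linarith
      moreover have "0 < k * x" using bb \<open>0 < x\<close> unfolding k_def by simp
      ultimately have "0 < k * x" "k * x < pi" by auto
      then have "sin (k*x) > 0" by (rule sin_gt_zero)
      then show ?thesis using pz 1 by (simp add: Fn_def)
    next
      case (2 x)
      then have "x < 1/2" using pn by auto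
      have "k * (1/2 - x) \<le> k * (1/2)" using 2 bb unfolding k_def by (intro mult_left_mono) auto
      also have "k * (1/2) = b" unfolding k_def by simp
      finally have "k * (1/2 - x) < pi" using b by linarith
      moreover have "0 < k * (1/2 - x)" using bb \<open>x < 1/2\<close> unfolding k_def by simp
      ultimately have "0 < k * (1/2 - x)" "k * (1/2 - x) < pi" by auto
      then have "sin (k*(1/2 - x)) > 0" by (rule sin_gt_zero)
      then show ?thesis using pz 2 by (simp add: Fn_def)
    next
      case (3 j y)
      then have "sin b * sin (a - k*y) / sin a = 0" using pz Fsm by simp
      then have hs: "sin (a - k*y) = 0" using S sc by simp
      have hb: "- pi < a - k*y" "a - k*y < pi"
      proof -
        have "k * y < k * eps" using 3 bb unfolding k_def by simp
        then show "- pi < a - k*y" using ke a_le pi_gt_zero by linarith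
        have "0 < k * y" using 3 bb unfolding k_def by simp
        then show "a - k*y < pi" using a_le pi_gt3 by linarith
      qed
      have "a - k * y = 0" by (rule sin_eq_0_pi[OF hb hs])
      then have "y = eps/2" using ke bb unfolding k_def by (simp add: field_simps)
      then show ?thesis using 3 by (intro image_eqI[of _ _ j]) auto
    qed
  next
    fix p assume "p \<in> (\<lambda>j. Sm j (eps/2)) ` {..<m}"
    then obtain j where j: "j < m" "p = Sm j (eps/2)" by auto
    have "a - k * (eps/2) = 0" using ke by (simp add: field_simps)
    then have h0: "sin (a - k * (eps/2)) = 0" by (simp only: sin_zero)
    have "Fn m (-1) k p = 0" unfolding j(2) Fsm h0 by simp
    moreover have "0 < eps/2" "eps/2 < eps" using e(1) by auto
    then have "Sm j (eps/2) \<in> {Sm j x | j x. j < m \<and> 0 < x \<and> x < eps}" using j(1)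
      by (intro CollectI exI[of _ j] exI[of _ "eps/2"]) simp
    then have "p \<in> gpoints m eps" unfolding gpoints_def j(2) by (rule UnI2)
    moreover have "p \<noteq> E1 0" "p \<noteq> E2 (1/2)" using j by auto
    ultimately show "p \<in> zero_set m eps (Fn m (-1) (2*b))"
      unfolding zero_set_def k_def[symmetric] by blast
  qed
qed

lemma sym_root_facts:
  assumes b: "pi < b" "b < 3*pi/2" and ph: "phi m eps b = 0"
  shows "\<forall>p\<in>gpoints m eps. Fn m 1 (2*b) (psi eps p) = 1 * Fn m 1 (2*b) p"
    and "zero_set m eps (Fn m 1 (2*b)) = {E1 (pi/(2*b)), E2 (1/2 - pi/(2*b))}"
proof -
  define a where "a = eps * b"
  define k where "k = 2 * b"
  have bb: "0 < b" "b \<le> 3*pi/2" using b pi_gt_zero by linarith+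
  have sc: "0 < sin a" "0 < cos a" using epsb_pos[OF m e bb] unfolding a_def by auto
  have a_le: "a \<le> 3*pi/8" using epsb[OF m e, of b] bb unfolding a_def by auto
  have M: "real m > 0" using m by simp
  have "sin b = - sin (b - pi)" by (simp add: sin_diff)
  moreover have "sin (b - pi) > 0" using b by (intro sin_gt_zero) auto
  ultimately have S: "sin b < 0" by simp
  have phv: "cos b * cos a = real m * sin b * sin a" using ph unfolding phi_def a_def by (simp add: algebra_simps)
  have G: "sin b * cos t + cos b / m * sin t = sin b * cos (t - a) / cos a" for t
    by (rule sym_ids(3)[OF M sc(2) phv])
  have Fsm: "Fn m 1 k (Sm j y) = sin b * cos (k*y - a) / cos a" for j y
    unfolding Fn_def k_def using G by simp
  have ke: "k * eps = 2 * a" unfolding k_def a_def by simp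
  have kb: "k * (1/2) = b" unfolding k_def by simp
  show "\<forall>p\<in>gpoints m eps. Fn m 1 (2*b) (psi eps p) = 1 * Fn m 1 (2*b) p"
  proof
    fix p assume "p \<in> gpoints m eps"
    then show "Fn m 1 (2*b) (psi eps p) = 1 * Fn m 1 (2*b) p"
    proof (cases rule: gp_cases)
      case (1 x)
      have "1/2 - (1/2 - x) = x" by simp
      then show ?thesis unfolding 1 psi.simps Fn_def gpoint.case by simp
    next
      case (2 x)
      have "1/2 - (1/2 - x) = x" by simp
      then show ?thesis unfolding 2 psi.simps Fn_def gpoint.case by simp
    next
      case (3 j y)
      have h: "k * (eps - y) - a = - (k*y - a)" using ke by (simp add: algebra_simps)
      have "cos (k * (eps - y) - a) = cos (k*y - a)" unfolding h by (rule cos_minus)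
      then show ?thesis unfolding 3 k_def[symmetric] psi.simps Fsm by simp
    qed
  qed
  have xq: "0 < pi / k" "pi / k < 1/2" using b pi_gt_zero unfolding k_def by (auto simp: field_simps)
  have kq: "k * (pi / k) = pi" using bb unfolding k_def by simp
  show "zero_set m eps (Fn m 1 (2*b)) = {E1 (pi/(2*b)), E2 (1/2 - pi/(2*b))}"
  proof (intro equalityI subsetI)
    fix p assume p: "p \<in> zero_set m eps (Fn m 1 (2*b))"
    then have pg: "p \<in> gpoints m eps" and pn: "p \<noteq> E1 0" "p \<noteq> E2 (1/2)"
      and pz: "Fn m 1 k p = 0" unfolding zero_set_def k_def by auto
    from pg show "p \<in> {E1 (pi/(2*b)), E2 (1/2 - pi/(2*b))}"
    proof (cases rule: gp_cases)
      case (1 x)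
      then have "0 < x" using pn by auto
      have "k * x \<le> k * (1/2)" using 1 bb unfolding k_def by (intro mult_left_mono) auto
      then have h2: "k * x < 2 * pi" using b kb by linarith
      have h1: "0 < k * x" using bb \<open>0 < x\<close> unfolding k_def by simp
      have h3: "sin (k*x) = 0" using pz 1 by (simp add: Fn_def)
      have "k * x = pi" by (rule sin_zero_02pi[OF h1 h2 h3])
      then have "x = pi / k" using bb unfolding k_def by (simp add: field_simps)
      then show ?thesis using 1 unfolding k_def by simp
    next
      case (2 x)
      then have "x < 1/2" using pn by auto
      have "k * (1/2 - x) \<le> k * (1/2)" using 2 bb unfolding k_def by (intro mult_left_mono) auto
      then have h2: "k * (1/2 - x) < 2 * pi" using b kb by linarith
      have h1: "0 < k * (1/2 - x)" using bb \<open>x < 1/2\<close> unfolding k_def by simp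
      have h3: "sin (k*(1/2 - x)) = 0" using pz 2 by (simp add: Fn_def)
      have hk: "k * (1/2 - x) = pi" by (rule sin_zero_02pi[OF h1 h2 h3])
      have kne: "k \<noteq> 0" using bb unfolding k_def by simp
      have "1/2 - x = pi / k" using hk kne by (simp add: eq_divide_eq mult.commute)
      then have "x = 1/2 - pi / k" by linarith
      then show ?thesis using 2 unfolding k_def by simp
    next
      case (3 j y)
      have "k * y < k * eps" using 3 bb unfolding k_def by simp
      then have c1: "k*y - a < pi/2" using ke a_le pi_gt3 by linarith
      have "0 < k * y" using 3 bb unfolding k_def by simp
      then have c2: "- (pi/2) < k*y - a" using a_le pi_gt3 by linarith
      have "cos (k*y - a) > 0" by (rule cos_gt_zero_pi[OF c2 c1])
      then have "sin b * cos (k*y - a) / cos a \<noteq> 0" using S sc by simp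
      then show ?thesis using pz Fsm 3 by simp
    qed
  next
    fix p assume "p \<in> {E1 (pi/(2*b)), E2 (1/2 - pi/(2*b))}"
    then consider "p = E1 (pi / k)" | "p = E2 (1/2 - pi / k)" unfolding k_def by auto
    then show "p \<in> zero_set m eps (Fn m 1 (2*b))"
    proof cases
      case 1
      have "Fn m 1 k p = 0" unfolding 1 Fn_def gpoint.case kq by simp
      moreover have "p \<in> gpoints m eps" unfolding 1 gpoints_def using xq by auto
      moreover have "p \<noteq> E1 0" "p \<noteq> E2 (1/2)" unfolding 1 using xq by auto
      ultimately show ?thesis unfolding zero_set_def k_def[symmetric] by blast
    next
      case 2
      have "k * (1/2 - (1/2 - pi / k)) = pi" using kq by simp
      then have "Fn m 1 k p = 0" unfolding 2 Fn_def gpoint.case by simp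
      moreover have "0 \<le> 1/2 - pi/k" "1/2 - pi/k \<le> 1/2" using xq by linarith+
      then have "E2 (1/2 - pi/k) \<in> {E2 x | x. 0 \<le> x \<and> x \<le> 1/2}" by blast
      then have "p \<in> gpoints m eps" unfolding 2 gpoints_def by blast
      moreover have "p \<noteq> E1 0" "p \<noteq> E2 (1/2)" unfolding 2 using xq by auto
      ultimately show ?thesis unfolding zero_set_def k_def[symmetric] by blast
    qed
  qed
qed

end

theorem lemma18:
  fixes m :: nat
  assumes "m \<ge> 1"
  shows "\<exists>eps>0. \<exists>l1 l2 l3. l1 < l2 \<and> l2 < l3 \<and>
     simple_eigenval m eps l1 \<and> simple_eigenval m eps l2 \<and> simple_eigenval m eps l3 \<and>
     (\<forall>mu. eigenval m eps mu \<longrightarrow> mu = l1 \<or> mu = l2 \<or> mu = l3 \<or> mu > l3) \<and>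
     (\<forall>f. eigenfun m eps l2 f \<longrightarrow>
        (\<forall>p\<in>gpoints m eps. f (psi eps p) = - f p) \<and>
        finite (zero_set m eps f) \<and> card (zero_set m eps f) = m) \<and>
     (\<forall>f. eigenfun m eps l3 f \<longrightarrow>
        (\<forall>p\<in>gpoints m eps. f (psi eps p) = f p) \<and>
        finite (zero_set m eps f) \<and> card (zero_set m eps f) = 2)"
proof -
  have m: "m \<ge> 1" by fact
  define eps :: real where "eps = 1/4"
  have e: "0 < eps" "eps \<le> 1/4" unfolding eps_def by auto
  have M: "real m > 0" using m by simp
  obtain b1 where b1: "0 < b1" "b1 < pi/2" "phi m eps b1 = 0" using root1[OF m e] by blast
  obtain b2 where b2: "pi/2 < b2" "b2 < pi" "chi m eps b2 = 0" using root2[OF m e] by blast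
  obtain b3 where b3: "pi < b3" "b3 < 3*pi/2" "phi m eps b3 = 0" using root3[OF m e] by blast
  have b1': "0 < b1" "b1 \<le> 3*pi/2" using b1 pi_gt_zero by linarith+
  have b2': "0 < b2" "b2 \<le> 3*pi/2" using b2 pi_gt_zero by linarith+
  have b3': "0 < b3" "b3 \<le> 3*pi/2" using b3 pi_gt_zero by linarith+
  define l1 where "l1 = (2*b1)^2"
  define l2 where "l2 = (2*b2)^2"
  define l3 where "l3 = (2*b3)^2"
  have sc1: "0 < sin (eps*b1)" "0 < cos (eps*b1)" using epsb_pos[OF m e b1'] by auto
  have ph1: "cos b1 * cos (eps*b1) = real m * sin b1 * sin (eps*b1)"
    using b1(3) unfolding phi_def by simp
  have cont1: "sin b1 * cos (2*(eps*b1)) + cos b1 / m * sin (2*(eps*b1)) = 1 * sin b1"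
    using sym_ids(1)[OF M sc1(2) ph1] by simp
  have kir1: "m * sin b1 * sin (2*(eps*b1)) = cos b1 * (cos (2*(eps*b1)) + 1)"
    using sym_ids(2)[OF M sc1(2) ph1] by simp
  have S1: "sin b1 \<noteq> 0" using b1 pi_gt_zero sin_gt_zero[of b1] by simp
  have sc2: "0 < sin (eps*b2)" "0 < cos (eps*b2)" using epsb_pos[OF m e b2'] by auto
  have ch2: "cos b2 * sin (eps*b2) = - real m * sin b2 * cos (eps*b2)"
    using b2(3) unfolding chi_def by (simp add: eq_neg_iff_add_eq_0)
  have cont2: "sin b2 * cos (2*(eps*b2)) + cos b2 / m * sin (2*(eps*b2)) = (-1) * sin b2"
    using asym_ids(1)[OF M sc2(1) ch2] by simp
  have kir2: "m * sin b2 * sin (2*(eps*b2)) = cos b2 * (cos (2*(eps*b2)) + (-1))"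
    using asym_ids(2)[OF M sc2(1) ch2] by simp
  have S2: "sin b2 \<noteq> 0" using b2 sin_gt_zero[of b2] by simp
  have sc3: "0 < sin (eps*b3)" "0 < cos (eps*b3)" using epsb_pos[OF m e b3'] by auto
  have ph3: "cos b3 * cos (eps*b3) = real m * sin b3 * sin (eps*b3)"
    using b3(3) unfolding phi_def by simp
  have cont3: "sin b3 * cos (2*(eps*b3)) + cos b3 / m * sin (2*(eps*b3)) = 1 * sin b3"
    using sym_ids(1)[OF M sc3(2) ph3] by simp
  have kir3: "m * sin b3 * sin (2*(eps*b3)) = cos b3 * (cos (2*(eps*b3)) + 1)"
    using sym_ids(2)[OF M sc3(2) ph3] by simp
  have "sin b3 = - sin (b3 - pi)" by (simp add: sin_diff)
  moreover have "sin (b3 - pi) > 0" using b3 by (intro sin_gt_zero) auto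
  ultimately have S3: "sin b3 \<noteq> 0" by simp
  have simp1: "simple_eigenval m eps l1" unfolding l1_def by (rule at_root[OF m e b1' S1 cont1 kir1])
  have simp2: "simple_eigenval m eps l2" unfolding l2_def by (rule at_root[OF m e b2' S2 cont2 kir2])
  have simp3: "simple_eigenval m eps l3" unfolding l3_def by (rule at_root[OF m e b3' S3 cont3 kir3])
  have o12: "l1 < l2" unfolding l1_def l2_def
    by (rule power_strict_mono[of "2*b1" "2*b2" 2]) (use b1 b2 in auto)
  have o23: "l2 < l3" unfolding l2_def l3_def
    by (rule power_strict_mono[of "2*b2" "2*b3" 2]) (use b2 b3 in auto)
  have cls: "mu = l1 \<or> mu = l2 \<or> mu = l3 \<or> mu > l3" if ev: "eigenval m eps mu" for mu
  proof (cases "mu > l3")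
    case True then show ?thesis by simp
  next
    case False
    then have mul: "mu \<le> l3" by simp
    obtain f where ef: "eigenfun m eps mu f" using ev unfolding eigenval_def by blast
    have mpos: "mu > 0" using eig_pos[OF m e(1) ef] .
    define k where "k = sqrt mu"
    have kpos: "k > 0" using mpos by (simp add: k_def)
    have kmu: "k^2 = mu" using mpos by (simp add: k_def)
    have kle: "k \<le> 2*b3"
    proof (rule ccontr)
      assume "\<not> k \<le> 2*b3"
      then have kb: "2*b3 < k" by simp
      have "(2*b3)^2 < k^2" by (rule power_strict_mono[of "2*b3" k 2]) (use kb b3' in auto)
      then show False using mul kmu unfolding l3_def by simp
    qed
    have "k * eps \<le> (2*b3) * (1/4)" by (rule mult_mono[of k "2*b3" eps "1/4"]) (use kle e b3' in auto)
    then have ke: "k * eps < pi" using b3 pi_gt_zero by linarith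
    have ef': "eigenfun m eps (k^2) f" unfolding kmu by (rule ef)
    obtain c d :: real where cd: "c \<noteq> 0"
       "c * cos (k/2) * sin (k*eps) / m = d * sin (k/2) - c * sin (k/2) * cos (k*eps)"
       "c * cos (k/2) * cos (k*eps) - m * c * sin (k/2) * sin (k*eps) + d * cos (k/2) = 0"
       "\<forall>x. 0 \<le> x \<longrightarrow> x \<le> 1/2 \<longrightarrow> f (E1 x) = c * sin (k*x)"
       "\<forall>x. 0 \<le> x \<longrightarrow> x \<le> 1/2 \<longrightarrow> f (E2 x) = d * sin (k*(1/2 - x))"
       "\<forall>j y. j < m \<longrightarrow> 0 < y \<longrightarrow> y < eps \<longrightarrow>
          f (Sm j y) = c * (sin (k/2) * cos (k*y) + cos (k/2) / m * sin (k*y))"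
      using eig_structure[OF m e(1) kpos ke ef'] by (elim exE conjE) blast
    have rt: "phi m eps (k/2) * chi m eps (k/2) = 0" by (rule root[OF m cd(1,2,3)])
    define b where "b = k/2"
    have bpos: "0 < b" and ble: "b \<le> b3" using kpos kle by (auto simp: b_def)
    have rt': "phi m eps b = 0 \<or> chi m eps b = 0" using rt unfolding b_def by simp
    have mub: "mu = (2*b)^2" using kmu unfolding b_def by simp
    consider "b \<le> pi/2" | "pi/2 < b \<and> b \<le> pi" | "pi < b" by linarith
    then show ?thesis
    proof cases
      case 1
      have "chi m eps b > 0" using chi_pos[OF m e bpos 1] .
      then have "phi m eps b = 0" using rt' by auto
      then have "b = b1" using phi_uniq1[OF m e, of b b1] bpos 1 b1 by auto
      then show ?thesis using mub l1_def by simp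
    next
      case 2
      have "phi m eps b < 0" using phi_neg[OF m e] 2 by auto
      then have "chi m eps b = 0" using rt' by auto
      then have "b = b2" using chi_uniq2[OF m e, of b b2] 2 b2 by auto
      then show ?thesis using mub l2_def by simp
    next
      case 3
      have "chi m eps b < 0" using chi_neg[OF m e] 3 ble b3 by auto
      then have "phi m eps b = 0" using rt' by auto
      then have "b = b3" using phi_uniq3[OF m e, of b b3] 3 ble b3 by auto
      then show ?thesis using mub l3_def by simp
    qed
  qed
  have f2: "(\<forall>p\<in>gpoints m eps. f (psi eps p) = - f p) \<and>
        finite (zero_set m eps f) \<and> card (zero_set m eps f) = m"
    if ef: "eigenfun m eps l2 f" for f
  proof -
    obtain c where c: "c \<noteq> 0" "\<forall>p\<in>gpoints m eps. f p = c * Fn m (-1) (2*b2) p"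
      using at_root_form[OF m e b2' S2 cont2] ef unfolding l2_def by blast
    have sy: "\<forall>p\<in>gpoints m eps. f (psi eps p) = (-1) * f p"
      by (rule transfer_sym[OF c(2) asym_root_facts(1)[OF m e b2]])
    have zs: "zero_set m eps f = (\<lambda>j. Sm j (eps/2)) ` {..<m}"
      using transfer_zero[OF c(2) c(1)] asym_root_facts(2)[OF m e b2] by simp
    have "inj_on (\<lambda>j. Sm j (eps/2)) {..<m}" by (auto intro: inj_onI)
    then have "card ((\<lambda>j. Sm j (eps/2)) ` {..<m}) = m" by (simp add: card_image)
    then show ?thesis using sy zs by simp
  qed
  have f3: "(\<forall>p\<in>gpoints m eps. f (psi eps p) = f p) \<and>
        finite (zero_set m eps f) \<and> card (zero_set m eps f) = 2"
    if ef: "eigenfun m eps l3 f" for f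
  proof -
    obtain c where c: "c \<noteq> 0" "\<forall>p\<in>gpoints m eps. f p = c * Fn m 1 (2*b3) p"
      using at_root_form[OF m e b3' S3 cont3] ef unfolding l3_def by blast
    have sy: "\<forall>p\<in>gpoints m eps. f (psi eps p) = 1 * f p"
      by (rule transfer_sym[OF c(2) sym_root_facts(1)[OF m e b3]])
    have zs: "zero_set m eps f = {E1 (pi/(2*b3)), E2 (1/2 - pi/(2*b3))}"
      using transfer_zero[OF c(2) c(1)] sym_root_facts(2)[OF m e b3] by simp
    then show ?thesis using sy zs by simp
  qed
  have "l1 < l2 \<and> l2 < l3 \<and>
     simple_eigenval m eps l1 \<and> simple_eigenval m eps l2 \<and> simple_eigenval m eps l3 \<and>
     (\<forall>mu. eigenval m eps mu \<longrightarrow> mu = l1 \<or> mu = l2 \<or> mu = l3 \<or> mu > l3) \<and>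
     (\<forall>f. eigenfun m eps l2 f \<longrightarrow>
        (\<forall>p\<in>gpoints m eps. f (psi eps p) = - f p) \<and>
        finite (zero_set m eps f) \<and> card (zero_set m eps f) = m) \<and>
     (\<forall>f. eigenfun m eps l3 f \<longrightarrow>
        (\<forall>p\<in>gpoints m eps. f (psi eps p) = f p) \<and>
        finite (zero_set m eps f) \<and> card (zero_set m eps f) = 2)"
    using o12 o23 simp1 simp2 simp3 cls f2 f3 by blast
  then show ?thesis using e(1) by blast
qed

end
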